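(* Let $\bar x\in M$ be a local minimizer of MPOC at which LICQ holds. Then $\bar x$ is a T-stationary point of MPOC.
   Context: MPOC: minimize $f(x)$ subject to $x\in M=\{x\in\mathbb{R}^n \mid h_i(x)=0,\ i\in I;\ g_j(x)\ge 0,\ j\in J;\ F_{1,m}(x)F_{2,m}(x)=0,\ F_{2,m}(x)\ge 0,\ m=1,\dots,k\}$ with $f,h_i,g_j,F_{1,m},F_{2,m}\in C^2(\mathbb{R}^n,\mathbb{R})$, $I,J$ finite. For $\bar x\in M$: $J_0(\bar x)=\{j\in J\mid g_j(\bar x)=0\}$, $a_{00}(\bar x)=\{m\mid F_{1,m}(\bar x)=0=F_{2,m}(\bar x)\}$, $a_{01}(\bar x)=\{m\mid F_{1,m}(\bar x)=0,F_{2,m}(\bar x)>0\}$, $a_{10}(\bar x)=\{m\mid F_{1,m}(\bar x)\ne0,F_{2,m}(\bar x)=0\}$. LICQ at $\bar x$: the vectors $Dh_i(\bar x)$ ($i\in I$), $Dg_j(\bar x)$ ($j\in J_0(\bar x)$), $DF_{1,m}(\bar x)$ ($m\in a_{01}(\bar x)\cup a_{00}(\bar x)$), $DF_{2,m}(\bar x)$ ($m\in a_{10}(\bar x)\cup a_{00}(\bar x)$) are linearly independent. T-stationarity: $\bar x\in M$ is T-stationary if there are multipliers $\bar\lambda_i$ ($i\in I$), $\bar\mu_j$ ($j\in J_0(\bar x)$), $\bar\sigma_{1,m}$ ($m\in a_{01}(\bar x)$), $\bar\sigma_{2,m}$ ($m\in a_{10}(\bar x)$), $\bar\varrho_{1,m},\bar\varrho_{2,m}$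 ($m\in a_{00}(\bar x)$) with $Df(\bar x)=\sum_{i\in I}\bar\lambda_iDh_i(\bar x)+\sum_{j\in J_0(\bar x)}\bar\mu_jDg_j(\bar x)+\sum_{m\in a_{01}(\bar x)}\bar\sigma_{1,m}DF_{1,m}(\bar x)+\sum_{m\in a_{10}(\bar x)}\bar\sigma_{2,m}DF_{2,m}(\bar x)+\sum_{m\in a_{00}(\bar x)}(\bar\varrho_{1,m}DF_{1,m}(\bar x)+\bar\varrho_{2,m}DF_{2,m}(\bar x))$, $\bar\mu_j\ge0$ for all $j\in J_0(\bar x)$, and for every $m\in a_{00}(\bar x)$: $\bar\varrho_{1,m}=0$ or $\bar\varrho_{2,m}\le 0$. *)

theory Defs
  imports "HOL-Analysis.Analysis"
begin

definition C2 :: "(real ^ 'n \<Rightarrow> real) \<Rightarrow> bool" where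
  "C2 \<phi> \<longleftrightarrow> (\<exists>G G'. (\<forall>x. GDERIV \<phi> x :> G x) \<and>
      (\<forall>x. (G has_derivative G' x) (at x)) \<and>
      (\<forall>v. continuous_on UNIV (\<lambda>x. G' x v)))"

definition grad :: "(real ^ 'n \<Rightarrow> real) \<Rightarrow> real ^ 'n \<Rightarrow> real ^ 'n" where
  "grad \<phi> x = (SOME D. GDERIV \<phi> x :> D)"

definition mpoc_feasible ::
  "('i \<Rightarrow> real ^ 'n \<Rightarrow> real) \<Rightarrow> 'i set \<Rightarrow> ('j \<Rightarrow> real ^ 'n \<Rightarrow> real) \<Rightarrow> 'j set \<Rightarrow>
   (nat \<Rightarrow> real ^ 'n \<Rightarrow> real) \<Rightarrow> (nat \<Rightarrow> real ^ 'n \<Rightarrow> real) \<Rightarrow> nat \<Rightarrow> (real ^ 'n) set" where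
  "mpoc_feasible h I g J F1 F2 k = {x. (\<forall>i\<in>I. h i x = 0) \<and> (\<forall>j\<in>J. g j x \<ge> 0) \<and>
      (\<forall>m\<in>{1..k}. F1 m x * F2 m x = 0 \<and> F2 m x \<ge> 0)}"

definition J0 :: "('j \<Rightarrow> real ^ 'n \<Rightarrow> real) \<Rightarrow> 'j set \<Rightarrow> real ^ 'n \<Rightarrow> 'j set" where
  "J0 g J x = {j\<in>J. g j x = 0}"

definition a00 :: "(nat \<Rightarrow> real ^ 'n \<Rightarrow> real) \<Rightarrow> (nat \<Rightarrow> real ^ 'n \<Rightarrow> real) \<Rightarrow> nat \<Rightarrow> real ^ 'n \<Rightarrow> nat set" where
  "a00 F1 F2 k x = {m\<in>{1..k}. F1 m x = 0 \<and> F2 m x = 0}"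

definition a01 :: "(nat \<Rightarrow> real ^ 'n \<Rightarrow> real) \<Rightarrow> (nat \<Rightarrow> real ^ 'n \<Rightarrow> real) \<Rightarrow> nat \<Rightarrow> real ^ 'n \<Rightarrow> nat set" where
  "a01 F1 F2 k x = {m\<in>{1..k}. F1 m x = 0 \<and> F2 m x > 0}"

definition a10 :: "(nat \<Rightarrow> real ^ 'n \<Rightarrow> real) \<Rightarrow> (nat \<Rightarrow> real ^ 'n \<Rightarrow> real) \<Rightarrow> nat \<Rightarrow> real ^ 'n \<Rightarrow> nat set" where
  "a10 F1 F2 k x = {m\<in>{1..k}. F1 m x \<noteq> 0 \<and> F2 m x = 0}"

definition LICQ ::
  "('i \<Rightarrow> real ^ 'n \<Rightarrow> real) \<Rightarrow> 'i set \<Rightarrow> ('j \<Rightarrow> real ^ 'n \<Rightarrow> real) \<Rightarrow> 'j set \<Rightarrow>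
   (nat \<Rightarrow> real ^ 'n \<Rightarrow> real) \<Rightarrow> (nat \<Rightarrow> real ^ 'n \<Rightarrow> real) \<Rightarrow> nat \<Rightarrow> real ^ 'n \<Rightarrow> bool" where
  "LICQ h I g J F1 F2 k x \<longleftrightarrow>
    (\<forall>(a::'i \<Rightarrow> real) (b::'j \<Rightarrow> real) (c::nat \<Rightarrow> real) (d::nat \<Rightarrow> real).
      (\<Sum>i\<in>I. a i *\<^sub>R grad (h i) x) + (\<Sum>j\<in>J0 g J x. b j *\<^sub>R grad (g j) x)
      + (\<Sum>m\<in>a01 F1 F2 k x \<union> a00 F1 F2 k x. c m *\<^sub>R grad (F1 m) x)
      + (\<Sum>m\<in>a10 F1 F2 k x \<union> a00 F1 F2 k x. d m *\<^sub>R grad (F2 m) x) = 0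
      \<longrightarrow> (\<forall>i\<in>I. a i = 0) \<and> (\<forall>j\<in>J0 g J x. b j = 0)
          \<and> (\<forall>m\<in>a01 F1 F2 k x \<union> a00 F1 F2 k x. c m = 0)
          \<and> (\<forall>m\<in>a10 F1 F2 k x \<union> a00 F1 F2 k x. d m = 0))"

definition T_stationary ::
  "(real ^ 'n \<Rightarrow> real) \<Rightarrow> ('i \<Rightarrow> real ^ 'n \<Rightarrow> real) \<Rightarrow> 'i set \<Rightarrow> ('j \<Rightarrow> real ^ 'n \<Rightarrow> real) \<Rightarrow> 'j set \<Rightarrow>
   (nat \<Rightarrow> real ^ 'n \<Rightarrow> real) \<Rightarrow> (nat \<Rightarrow> real ^ 'n \<Rightarrow> real) \<Rightarrow> nat \<Rightarrow> real ^ 'n \<Rightarrow> bool" where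
  "T_stationary f h I g J F1 F2 k x \<longleftrightarrow> x \<in> mpoc_feasible h I g J F1 F2 k \<and>
    (\<exists>(lam::'i \<Rightarrow> real) (mu::'j \<Rightarrow> real) (s1::nat \<Rightarrow> real) (s2::nat \<Rightarrow> real)
       (r1::nat \<Rightarrow> real) (r2::nat \<Rightarrow> real).
      grad f x = (\<Sum>i\<in>I. lam i *\<^sub>R grad (h i) x) + (\<Sum>j\<in>J0 g J x. mu j *\<^sub>R grad (g j) x)
        + (\<Sum>m\<in>a01 F1 F2 k x. s1 m *\<^sub>R grad (F1 m) x)
        + (\<Sum>m\<in>a10 F1 F2 k x. s2 m *\<^sub>R grad (F2 m) x)
        + (\<Sum>m\<in>a00 F1 F2 k x. r1 m *\<^sub>R grad (F1 m) x + r2 m *\<^sub>R grad (F2 m) x)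
      \<and> (\<forall>j\<in>J0 g J x. mu j \<ge> 0)
      \<and> (\<forall>m\<in>a00 F1 F2 k x. r1 m = 0 \<or> r2 m \<le> 0))"

definition local_minimizer :: "(real ^ 'n \<Rightarrow> real) \<Rightarrow> (real ^ 'n) set \<Rightarrow> real ^ 'n \<Rightarrow> bool" where
  "local_minimizer f S x \<longleftrightarrow> x \<in> S \<and> (\<exists>e>0. \<forall>y\<in>S. dist y x < e \<longrightarrow> f x \<le> f y)"

end

theory Submission
  imports Defs
begin


lemma span_image_sum:
  fixes v :: "'a \<Rightarrow> 'b::real_vector"
  assumes "x \<in> span (v ` A)" and "finite A"
  shows "\<exists>c. x = (\<Sum>a\<in>A. c a *\<^sub>R v a)"
proof -
  let ?R = "range (\<lambda>c. \<Sum>a\<in>A. c a *\<^sub>R v a)"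
  have sub: "subspace ?R"
    unfolding subspace_def
  proof (intro conjI ballI allI)
    show "0 \<in> ?R" by (rule range_eqI[where x="\<lambda>_. 0"]) simp
  next
    fix x y assume "x \<in> ?R" "y \<in> ?R"
    then obtain c1 c2 where "x = (\<Sum>a\<in>A. c1 a *\<^sub>R v a)" "y = (\<Sum>a\<in>A. c2 a *\<^sub>R v a)" by auto
    then show "x + y \<in> ?R"
      by (intro range_eqI[where x="\<lambda>a. c1 a + c2 a"]) (simp add: scaleR_add_left sum.distrib)
  next
    fix c x assume "x \<in> ?R"
    then obtain c1 where "x = (\<Sum>a\<in>A. c1 a *\<^sub>R v a)" by auto
    then show "c *\<^sub>R x \<in> ?R"
      by (intro range_eqI[where x="\<lambda>a. c * c1 a"]) (simp add: scaleR_sum_right)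
  qed
  have "v ` A \<subseteq> ?R"
  proof
    fix w assume "w \<in> v ` A"
    then obtain b where b: "b \<in> A" "w = v b" by auto
    show "w \<in> ?R"
    proof (rule range_eqI[where x="\<lambda>a. if a = b then 1 else 0"])
      show "w = (\<Sum>a\<in>A. (if a = b then 1 else 0) *\<^sub>R v a)"
        using b \<open>finite A\<close> by (simp add: if_distrib[of "\<lambda>r. r *\<^sub>R _"] sum.delta cong: if_cong)
    qed
  qed
  then have "span (v ` A) \<subseteq> ?R" using sub by (rule span_minimal)
  then show ?thesis using assms by auto
qed

lemma dual_vectors:
  fixes v :: "'a \<Rightarrow> 'b::euclidean_space"
  assumes fin: "finite S" and indep: "\<forall>\<alpha>. (\<Sum>a\<in>S. \<alpha> a *\<^sub>R v a) = 0 \<longrightarrow> (\<forall>a\<in>S. \<alpha> a = 0)"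
  shows "\<exists>z. \<forall>a\<in>S. \<forall>b\<in>S. v a \<bullet> z b = (if a = b then 1 else 0)"
proof -
  have "\<forall>b\<in>S. \<exists>z. \<forall>a\<in>S. v a \<bullet> z = (if a = b then 1 else 0)"
  proof
    fix b assume bS: "b \<in> S"
    obtain p q where p: "p \<in> span (v ` (S - {b}))"
      and q: "\<And>w. w \<in> span (v ` (S - {b})) \<Longrightarrow> orthogonal q w" and vb: "v b = p + q"
      using orthogonal_subspace_decomp_exists by blast
    have qn: "q \<noteq> 0"
    proof
      assume "q = 0"
      then have "v b \<in> span (v ` (S - {b}))" using p vb by simp
      then obtain c where c: "v b = (\<Sum>a\<in>S - {b}. c a *\<^sub>R v a)" using span_image_sum fin by blast
      let ?\<alpha> = "\<lambda>a. if a = b then -1 else c a"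
      have "(\<Sum>a\<in>S. ?\<alpha> a *\<^sub>R v a) = ?\<alpha> b *\<^sub>R v b + (\<Sum>a\<in>S - {b}. ?\<alpha> a *\<^sub>R v a)"
        using fin bS by (simp add: sum.remove)
      also have "(\<Sum>a\<in>S - {b}. ?\<alpha> a *\<^sub>R v a) = (\<Sum>a\<in>S - {b}. c a *\<^sub>R v a)"
        by (rule sum.cong) auto
      finally have "(\<Sum>a\<in>S. ?\<alpha> a *\<^sub>R v a) = 0" using c by simp
      then show False using indep bS by force
    qed
    have pq: "p \<bullet> q = 0" using q[OF p] by (simp add: orthogonal_def inner_commute)
    show "\<exists>z. \<forall>a\<in>S. v a \<bullet> z = (if a = b then 1 else 0)"
    proof (intro exI ballI)
      fix a assume aS: "a \<in> S"
      show "v a \<bullet> (q /\<^sub>R (q \<bullet> q)) = (if a = b then 1 else 0)"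
      proof (cases "a = b")
        case True
        then show ?thesis using vb pq qn by (simp add: inner_add_left)
      next
        case False
        then have "v a \<in> span (v ` (S - {b}))" using aS by (intro span_base) auto
        then have "v a \<bullet> q = 0" using q by (metis orthogonal_def inner_commute)
        then show ?thesis using False by simp
      qed
    qed
  qed
  then obtain z where "\<forall>b\<in>S. \<forall>a\<in>S. v a \<bullet> z b = (if a = b then 1 else 0)"
    by (metis bchoice)
  then show ?thesis by blast
qed


lemma DERIV_minsq: "((\<lambda>s::real. (min s 0)^2) has_real_derivative 2 * min s 0) (at s)"
proof (cases "s < 0")
  case True
  have "((\<lambda>s::real. s^2) has_real_derivative 2 * s) (at s)"
    by (auto intro!: derivative_eq_intros)
  then have "((\<lambda>s::real. (min s 0)^2) has_real_derivative 2 * s) (at s)"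
    apply (rule has_field_derivative_transform_within_open[where S="{..<0}"])
    using True by auto
  then show ?thesis using True by simp
next
  case False
  show ?thesis
  proof (cases "s > 0")
    case True
    have "((\<lambda>s::real. 0) has_real_derivative 0) (at s)"
      by (auto intro!: derivative_eq_intros)
    then have "((\<lambda>s::real. (min s 0)^2) has_real_derivative 0) (at s)"
      apply (rule has_field_derivative_transform_within_open[where S="{0<..}"])
      using True by auto
    then show ?thesis using True by simp
  next
    case False
    with \<open>\<not> s < 0\<close> have s0: "s = 0" by simp
    have "((\<lambda>h::real. ((min (0 + h) 0)^2 - (min 0 0)^2) / h) \<longlongrightarrow> 0) (at 0)"
    proof (rule Lim_null_comparison[where g="\<lambda>h. \<bar>h\<bar>"])
      show "\<forall>\<^sub>F h in at 0. norm (((min (0 + h) 0)^2 - (min 0 0)^2) / h) \<le> \<bar>h\<bar>"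
        by (auto simp: power2_eq_square abs_mult min_def)
      show "((\<lambda>h::real. \<bar>h\<bar>) \<longlongrightarrow> 0) (at 0)"
        using tendsto_rabs[OF tendsto_ident_at[of 0 UNIV]] by simp
    qed
    then show ?thesis using s0 by (simp add: DERIV_def)
  qed
qed


lemma KKT:
  fixes f :: "'b::euclidean_space \<Rightarrow> real" and u :: "'a \<Rightarrow> 'b \<Rightarrow> real"
  assumes fin: "finite S" and CS: "C \<subseteq> S"
    and df: "\<And>x. (f has_derivative (\<lambda>h. Gf x \<bullet> h)) (at x)" and cGf: "\<And>x. isCont Gf x"
    and du: "\<And>a x. a \<in> S \<Longrightarrow> (u a has_derivative (\<lambda>h. G a x \<bullet> h)) (at x)"
    and cG: "\<And>a x. a \<in> S \<Longrightarrow> isCont (G a) x"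
    and act: "\<And>a. a \<in> S \<Longrightarrow> u a xbar = 0"
    and dpos: "\<delta> > 0"
    and lmin: "\<And>y. dist y xbar < \<delta> \<Longrightarrow> (\<forall>a\<in>S-C. u a y = 0) \<Longrightarrow> (\<forall>a\<in>C. u a y \<ge> 0) \<Longrightarrow> f xbar \<le> f y"
    and indep: "\<forall>\<alpha>. (\<Sum>a\<in>S. \<alpha> a *\<^sub>R G a xbar) = 0 \<longrightarrow> (\<forall>a\<in>S. \<alpha> a = 0)"
  shows "\<exists>\<gamma>. Gf xbar = (\<Sum>a\<in>S. \<gamma> a *\<^sub>R G a xbar) \<and> (\<forall>a\<in>C. \<gamma> a \<ge> 0)"
proof -
  define ps where "ps a s = (if a \<in> C then (min s 0)^2 else s^2)" for a and s :: real
  define dps where "dps a s = (if a \<in> C then 2 * min s 0 else 2 * s)" for a and s :: real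
  have dps_deriv: "(ps a has_real_derivative dps a s) (at s)" for a s
  proof (cases "a \<in> C")
    case True
    then show ?thesis unfolding ps_def dps_def using DERIV_minsq[of s] by simp
  next
    case False
    have "((\<lambda>s::real. s^2) has_real_derivative 2 * s) (at s)"
      by (auto intro!: derivative_eq_intros)
    then show ?thesis unfolding ps_def dps_def using False by simp
  qed
  have ps_nonneg: "ps a s \<ge> 0" for a s unfolding ps_def by auto
  have ps0: "ps a 0 = 0" for a unfolding ps_def by auto
  have ps_zero: "ps a s = 0 \<Longrightarrow> (if a \<in> C then s \<ge> 0 else s = 0)" for a s
    unfolding ps_def by (auto split: if_splits simp: min_def)
  have dps_C: "a \<in> C \<Longrightarrow> dps a s \<le> 0" for a and s :: real unfolding dps_def by auto
  define P where "P y = (\<Sum>a\<in>S. ps a (u a y))" for y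
  have P_nonneg: "P y \<ge> 0" for y unfolding P_def by (intro sum_nonneg ps_nonneg)
  have P_xbar: "P xbar = 0" unfolding P_def using act ps0 by simp
  have P_zero: "P y = 0 \<Longrightarrow> (\<forall>a\<in>S-C. u a y = 0) \<and> (\<forall>a\<in>C. u a y \<ge> 0)" for y
  proof -
    assume "P y = 0"
    then have "\<forall>a\<in>S. ps a (u a y) = 0"
      using sum_nonneg_eq_0_iff[OF fin, of "\<lambda>a. ps a (u a y)"] ps_nonneg \<open>P y = 0\<close>
      unfolding P_def by simp
    then have "\<forall>a\<in>S. (if a \<in> C then u a y \<ge> 0 else u a y = 0)" using ps_zero by blast
    then show ?thesis using CS by (auto split: if_splits)
  qed
  have contf: "isCont f x" for x using df[of x] by (rule has_derivative_continuous)
  have contu: "a \<in> S \<Longrightarrow> isCont (u a) x" for a x using du[of a x] by (rule has_derivative_continuous)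
  have contps: "isCont (ps a) s" for a s using dps_deriv by (rule DERIV_isCont)
  have contP: "isCont P x" for x
  proof -
    have "isCont (\<lambda>y. ps a (u a y)) x" if "a \<in> S" for a
      using continuous_at_compose[OF contu[OF that] contps, unfolded o_def] .
    then show ?thesis unfolding P_def by (intro continuous_sum) auto
  qed
  define r where "r = \<delta> / 2"
  have rpos: "r > 0" "r < \<delta>" using dpos unfolding r_def by auto
  define \<phi> where "\<phi> t z = f z + ((z - xbar) \<bullet> (z - xbar))^2 + real t * P z" for t :: nat and z
  have contphi: "continuous_on UNIV (\<phi> t)" for t
    unfolding \<phi>_def
    by (intro continuous_at_imp_continuous_on ballI continuous_intros contf contP)
  have "\<forall>t. \<exists>w\<in>cball xbar r. \<forall>z\<in>cball xbar r. \<phi> t w \<le> \<phi> t z"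
  proof
    fix t
    show "\<exists>w\<in>cball xbar r. \<forall>z\<in>cball xbar r. \<phi> t w \<le> \<phi> t z"
      using continuous_attains_inf[OF compact_cball _ continuous_on_subset[OF contphi]] rpos
      by (metis centre_in_cball less_le empty_iff subset_UNIV)
  qed
  then obtain ys where ysc: "\<And>t. ys t \<in> cball xbar r"
    and ysmin: "\<And>t z. z \<in> cball xbar r \<Longrightarrow> \<phi> t (ys t) \<le> \<phi> t z"
    by metis
  define q where "q z = f z + ((z - xbar) \<bullet> (z - xbar))^2 - f xbar" for z
  have qP: "q (ys t) + real t * P (ys t) \<le> 0" for t
    using ysmin[of xbar t] rpos P_xbar unfolding \<phi>_def q_def by simp
  have feas_q: "q z \<ge> ((z - xbar) \<bullet> (z - xbar))^2" if "z \<in> cball xbar r" "P z = 0" for z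
  proof -
    have "dist z xbar < \<delta>" using that(1) rpos by (simp add: dist_commute)
    then have "f xbar \<le> f z" using lmin P_zero[OF that(2)] by blast
    then show ?thesis unfolding q_def by simp
  qed
  have contq: "isCont q x" for x unfolding q_def by (intro continuous_intros contf)
  have conv: "ys \<longlonglongrightarrow> xbar"
  proof (rule tendstoI)
    fix \<epsilon> :: real assume epos: "\<epsilon> > 0"
    define K where "K = cball xbar r \<inter> {z. \<epsilon> \<le> dist z xbar}"
    show "eventually (\<lambda>t. dist (ys t) xbar < \<epsilon>) sequentially"
    proof (cases "K = {}")
      case True
      have "dist (ys t) xbar < \<epsilon>" for t
      proof (rule ccontr)
        assume "\<not> dist (ys t) xbar < \<epsilon>"
        then have "ys t \<in> K" using ysc[of t] unfolding K_def by auto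
        then show False using True by blast
      qed
      then show ?thesis by (intro always_eventually) auto
    next
      case False
      have cK: "compact K" unfolding K_def
        by (intro compact_Int_closed compact_cball closed_Collect_le continuous_intros)
      define \<psi> where "\<psi> z = max (q z) (P z)" for z
      have contpsi: "continuous_on K \<psi>" unfolding \<psi>_def
        by (intro continuous_at_imp_continuous_on ballI continuous_intros contq contP)
      have contq': "continuous_on K q" by (intro continuous_at_imp_continuous_on ballI contq)
      obtain z0 where z0: "z0 \<in> K" "\<forall>z\<in>K. \<psi> z0 \<le> \<psi> z"
        using continuous_attains_inf[OF cK False contpsi] by blast
      obtain z1 where z1: "z1 \<in> K" "\<forall>z\<in>K. q z1 \<le> q z"
        using continuous_attains_inf[OF cK False contq'] by blast
      have psipos: "\<psi> z > 0" if "z \<in> K" for z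
      proof (cases "P z = 0")
        case True
        have zc: "z \<in> cball xbar r" and "\<epsilon> \<le> dist z xbar" using that unfolding K_def by auto
        then have "z \<noteq> xbar" using epos by auto
        then have "(z - xbar) \<bullet> (z - xbar) > 0" by simp
        then have "q z > 0" using feas_q[OF zc True] by (smt (verit) zero_less_power)
        then show ?thesis unfolding \<psi>_def by simp
      next
        case False
        then have "P z > 0" using P_nonneg[of z] by simp
        then show ?thesis unfolding \<psi>_def by simp
      qed
      define \<eta> where "\<eta> = \<psi> z0"
      have etapos: "\<eta> > 0" unfolding \<eta>_def using psipos z0 by blast
      obtain N :: nat where N: "\<bar>q z1\<bar> / \<eta> < real N" using reals_Archimedean2 by blast
      show ?thesis
      proof (rule eventually_sequentiallyI[of N])
        fix t assume "N \<le> t"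
        have "\<bar>q z1\<bar> < real N * \<eta>" using N etapos by (simp add: divide_less_eq)
        also have "\<dots> \<le> real t * \<eta>" using \<open>N \<le> t\<close> etapos by simp
        finally have teta: "\<bar>q z1\<bar> < real t * \<eta>" .
        show "dist (ys t) xbar < \<epsilon>"
        proof (rule ccontr)
          assume "\<not> dist (ys t) xbar < \<epsilon>"
          then have yK: "ys t \<in> K" using ysc unfolding K_def by auto
          have "q (ys t) + real t * P (ys t) > 0"
          proof (cases "P (ys t) \<ge> \<eta>")
            case True
            then have "real t * \<eta> \<le> real t * P (ys t)" by (simp add: mult_left_mono)
            moreover have "q z1 \<le> q (ys t)" using z1 yK by blast
            ultimately show ?thesis using teta by linarith
          next
            case False
            have "\<eta> \<le> \<psi> (ys t)" unfolding \<eta>_def using z0 yK by blast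
            then have "q (ys t) \<ge> \<eta>" using False unfolding \<psi>_def by linarith
            moreover have "real t * P (ys t) \<ge> 0" using P_nonneg by simp
            ultimately show ?thesis using etapos by linarith
          qed
          then show False using qP[of t] by linarith
        qed
      qed
    qed
  qed
  have inter: "eventually (\<lambda>t. dist (ys t) xbar < r) sequentially"
    using tendstoD[OF conv rpos(1)] .
  define V where "V t z = Gf z + (4 * ((z - xbar) \<bullet> (z - xbar))) *\<^sub>R (z - xbar)
      + (\<Sum>a\<in>S. (real t * dps a (u a z)) *\<^sub>R G a z)" for t :: nat and z
  have dphi: "(\<phi> t has_derivative (\<lambda>h. V t z \<bullet> h)) (at z)" for t z
  proof -
    have d1: "((\<lambda>y. ps a (u a y)) has_derivative (\<lambda>h. dps a (u a z) * (G a z \<bullet> h))) (at z)"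
      if "a \<in> S" for a
      using has_derivative_compose[OF du[OF that] dps_deriv[unfolded has_field_derivative_def]]
      by (simp add: o_def)
    have d2: "((\<lambda>y. (y - xbar) \<bullet> (y - xbar)) has_derivative (\<lambda>h. 2 * ((z - xbar) \<bullet> h))) (at z)"
      by (rule has_derivative_eq_rhs, (rule derivative_intros)+) (auto simp: inner_commute)
    have d3: "((\<lambda>y. ((y - xbar) \<bullet> (y - xbar))^2) has_derivative
        (\<lambda>h. of_nat 2 * (2 * ((z - xbar) \<bullet> h)) * ((z - xbar) \<bullet> (z - xbar))^(2 - 1))) (at z)"
      by (rule has_derivative_power[OF d2])
    have d4: "((\<lambda>y. \<Sum>a\<in>S. ps a (u a y)) has_derivative (\<lambda>h. \<Sum>a\<in>S. dps a (u a z) * (G a z \<bullet> h))) (at z)"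
      by (rule has_derivative_sum) (rule d1)
    have d5: "((\<lambda>y. real t * (\<Sum>a\<in>S. ps a (u a y))) has_derivative
        (\<lambda>h. real t * (\<Sum>a\<in>S. dps a (u a z) * (G a z \<bullet> h)))) (at z)"
      by (rule has_derivative_mult_right[OF d4])
    have "(\<phi> t has_derivative (\<lambda>h. Gf z \<bullet> h + of_nat 2 * (2 * ((z - xbar) \<bullet> h)) * ((z - xbar) \<bullet> (z - xbar))^(2 - 1)
        + real t * (\<Sum>a\<in>S. dps a (u a z) * (G a z \<bullet> h)))) (at z)"
      unfolding \<phi>_def P_def by (intro has_derivative_add df d3 d5)
    then show ?thesis
    proof (rule has_derivative_eq_rhs)
      show "(\<lambda>h. Gf z \<bullet> h + of_nat 2 * (2 * ((z - xbar) \<bullet> h)) * ((z - xbar) \<bullet> (z - xbar))^(2 - 1)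
        + real t * (\<Sum>a\<in>S. dps a (u a z) * (G a z \<bullet> h))) = (\<lambda>h. V t z \<bullet> h)"
        unfolding V_def
        by (auto simp: inner_add_left inner_sum_left inner_sum_right sum_distrib_left algebra_simps inner_commute)
    qed
  qed
  have Vzero: "eventually (\<lambda>t. V t (ys t) = 0) sequentially"
    using inter
  proof eventually_elim
    case (elim t)
    have "eventually (\<lambda>z. \<phi> t (ys t) \<le> \<phi> t z) (at (ys t))"
      unfolding eventually_at
    proof (intro exI[of _ "r - dist (ys t) xbar"] conjI allI impI ballI)
      show "r - dist (ys t) xbar > 0" using elim by simp
      fix z assume "z \<noteq> ys t \<and> dist z (ys t) < r - dist (ys t) xbar"
      then have "dist z xbar \<le> r" using dist_triangle[of z xbar "ys t"] by linarith
      then show "\<phi> t (ys t) \<le> \<phi> t z" using ysmin by (simp add: dist_commute)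
    qed
    from has_derivative_local_min[OF dphi this]
    have "(\<lambda>h. V t (ys t) \<bullet> h) = (\<lambda>h. 0)" .
    then have "V t (ys t) \<bullet> V t (ys t) = 0" by meson
    then show ?case by simp
  qed
  define \<gamma> where "\<gamma> t a = - (real t * dps a (u a (ys t)))" for t :: nat and a
  define R where "R t = Gf (ys t) + (4 * ((ys t - xbar) \<bullet> (ys t - xbar))) *\<^sub>R (ys t - xbar)" for t
  have Rsum: "eventually (\<lambda>t. R t = (\<Sum>a\<in>S. \<gamma> t a *\<^sub>R G a (ys t))) sequentially"
    using Vzero
  proof eventually_elim
    case (elim t)
    then have "R t + (\<Sum>a\<in>S. (real t * dps a (u a (ys t))) *\<^sub>R G a (ys t)) = 0"
      unfolding V_def R_def by simp
    then have "R t = - (\<Sum>a\<in>S. (real t * dps a (u a (ys t))) *\<^sub>R G a (ys t))"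
      by (simp add: eq_neg_iff_add_eq_0)
    then show ?case unfolding \<gamma>_def by (simp add: sum_negf[symmetric])
  qed
  have gammaC: "a \<in> C \<Longrightarrow> \<gamma> t a \<ge> 0" for t a
    unfolding \<gamma>_def using dps_C[of a "u a (ys t)"] by (simp add: mult_nonneg_nonpos)
  have d0: "(\<lambda>t. ys t - xbar) \<longlonglongrightarrow> 0"
    using tendsto_diff[OF conv tendsto_const[of xbar]] by simp
  have Rlim: "R \<longlonglongrightarrow> Gf xbar"
  proof -
    have "(\<lambda>t. Gf (ys t)) \<longlonglongrightarrow> Gf xbar" by (rule isCont_tendsto_compose[OF cGf conv])
    moreover have "(\<lambda>t. (4 * ((ys t - xbar) \<bullet> (ys t - xbar))) *\<^sub>R (ys t - xbar)) \<longlonglongrightarrow> (4 * ((0::'b) \<bullet> 0)) *\<^sub>R (0::'b)"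
      using tendsto_inner[OF d0 d0] by (intro tendsto_intros d0)
    ultimately show ?thesis unfolding R_def using tendsto_add by fastforce
  qed
  have Glim: "(\<lambda>t. G a (ys t)) \<longlonglongrightarrow> G a xbar" if "a \<in> S" for a
    by (rule isCont_tendsto_compose[OF cG[OF that] conv])
  obtain z where z: "\<forall>a\<in>S. \<forall>b\<in>S. G a xbar \<bullet> z b = (if a = b then 1 else 0)"
    using dual_vectors[OF fin indep] by blast
  define A where "A t a b = G a (ys t) \<bullet> z b - (if a = b then 1 else 0)" for t :: nat and a b
  have Alim: "(\<lambda>t. A t a b) \<longlonglongrightarrow> 0" if "a \<in> S" "b \<in> S" for a b
  proof -
    have "(\<lambda>t. A t a b) \<longlonglongrightarrow> G a xbar \<bullet> z b - (if a = b then 1 else 0)"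
      unfolding A_def by (intro tendsto_intros Glim that)
    then show ?thesis using z that by simp
  qed
  define e where "e t = (\<Sum>a\<in>S. \<Sum>b\<in>S. \<bar>A t a b\<bar>)" for t
  have elim: "e \<longlonglongrightarrow> 0"
    unfolding e_def by (intro tendsto_null_sum tendsto_rabs_zero Alim) auto
  have e_nonneg: "e t \<ge> 0" for t unfolding e_def by (intro sum_nonneg) auto
  have Ale: "\<bar>A t a b\<bar> \<le> e t" if "a \<in> S" "b \<in> S" for t a b
  proof -
    have "\<bar>A t a b\<bar> \<le> (\<Sum>b\<in>S. \<bar>A t a b\<bar>)" by (rule member_le_sum) (use that fin in auto)
    also have "\<dots> \<le> e t" unfolding e_def
      by (rule member_le_sum[where f="\<lambda>a. \<Sum>b\<in>S. \<bar>A t a b\<bar>"]) (use that fin in \<open>auto intro: sum_nonneg\<close>)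
    finally show ?thesis .
  qed
  define \<Gamma> where "\<Gamma> t = (\<Sum>a\<in>S. \<bar>\<gamma> t a\<bar>)" for t
  have Gamma_nonneg: "\<Gamma> t \<ge> 0" for t unfolding \<Gamma>_def by (intro sum_nonneg) auto
  have key: "eventually (\<lambda>t. \<forall>b\<in>S. \<bar>\<gamma> t b - R t \<bullet> z b\<bar> \<le> \<Gamma> t * e t) sequentially"
    using Rsum
  proof eventually_elim
    case (elim t)
    show ?case
    proof
      fix b assume bS: "b \<in> S"
      have "R t \<bullet> z b = (\<Sum>a\<in>S. \<gamma> t a * (G a (ys t) \<bullet> z b))"
        using elim by (simp add: inner_sum_left)
      also have "\<dots> = (\<Sum>a\<in>S. \<gamma> t a * A t a b + \<gamma> t a * (if a = b then 1 else 0))"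
        unfolding A_def by (simp add: algebra_simps)
      also have "\<dots> = (\<Sum>a\<in>S. \<gamma> t a * A t a b) + \<gamma> t b"
        using fin bS by (simp add: sum.distrib if_distrib[of "\<lambda>x. _ * x"] sum.delta cong: if_cong)
      finally have "\<gamma> t b - R t \<bullet> z b = - (\<Sum>a\<in>S. \<gamma> t a * A t a b)" by simp
      then have "\<bar>\<gamma> t b - R t \<bullet> z b\<bar> \<le> (\<Sum>a\<in>S. \<bar>\<gamma> t a * A t a b\<bar>)"
        by (simp add: sum_abs)
      also have "\<dots> \<le> (\<Sum>a\<in>S. \<bar>\<gamma> t a\<bar> * e t)"
        by (rule sum_mono) (use Ale bS in \<open>auto simp: abs_mult intro: mult_left_mono\<close>)
      also have "\<dots> = \<Gamma> t * e t" unfolding \<Gamma>_def by (simp add: sum_distrib_right)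
      finally show "\<bar>\<gamma> t b - R t \<bullet> z b\<bar> \<le> \<Gamma> t * e t" .
    qed
  qed
  define Rz where "Rz t = (\<Sum>b\<in>S. \<bar>R t \<bullet> z b\<bar>)" for t
  have ce: "eventually (\<lambda>t. real (card S) * e t < 1/2) sequentially"
  proof -
    have "(\<lambda>t. real (card S) * e t) \<longlonglongrightarrow> real (card S) * 0" by (intro tendsto_intros elim)
    then show ?thesis by (rule order_tendstoD) simp
  qed
  have Gb: "eventually (\<lambda>t. \<Gamma> t \<le> 2 * Rz t) sequentially"
    using key ce
  proof eventually_elim
    case (elim t)
    have "\<Gamma> t \<le> (\<Sum>b\<in>S. \<bar>R t \<bullet> z b\<bar> + \<Gamma> t * e t)"
      unfolding \<Gamma>_def
    proof (rule sum_mono)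
      fix b assume "b \<in> S"
      then show "\<bar>\<gamma> t b\<bar> \<le> \<bar>R t \<bullet> z b\<bar> + (\<Sum>a\<in>S. \<bar>\<gamma> t a\<bar>) * e t"
        using elim(1) unfolding \<Gamma>_def by force
    qed
    also have "\<dots> = Rz t + \<Gamma> t * (real (card S) * e t)"
      unfolding Rz_def by (simp add: sum.distrib algebra_simps)
    also have "\<dots> \<le> Rz t + \<Gamma> t * (1/2)"
      using elim(2) Gamma_nonneg[of t] by (intro add_left_mono mult_left_mono) auto
    finally show ?case by simp
  qed
  define Rinf where "Rinf = (\<Sum>b\<in>S. \<bar>Gf xbar \<bullet> z b\<bar>)"
  have "Rz \<longlonglongrightarrow> Rinf" unfolding Rz_def Rinf_def by (intro tendsto_intros Rlim)
  then have Rzb: "eventually (\<lambda>t. Rz t < Rinf + 1) sequentially"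
    by (rule order_tendstoD) simp
  have gamlim: "(\<lambda>t. \<gamma> t b) \<longlonglongrightarrow> Gf xbar \<bullet> z b" if bS: "b \<in> S" for b
  proof -
    have "(\<lambda>t. \<gamma> t b - R t \<bullet> z b) \<longlonglongrightarrow> 0"
    proof (rule Lim_null_comparison)
      show "eventually (\<lambda>t. norm (\<gamma> t b - R t \<bullet> z b) \<le> (2 * (Rinf + 1)) * e t) sequentially"
        using key Gb Rzb
      proof eventually_elim
        case (elim t)
        have "\<bar>\<gamma> t b - R t \<bullet> z b\<bar> \<le> \<Gamma> t * e t" using elim(1) bS by blast
        also have "\<dots> \<le> (2 * (Rinf + 1)) * e t"
          using elim(2,3) e_nonneg[of t] by (intro mult_right_mono) auto
        finally show ?case by simp
      qed
      show "(\<lambda>t. (2 * (Rinf + 1)) * e t) \<longlonglongrightarrow> 0"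
        using tendsto_mult_right_zero[OF elim] by simp
    qed
    moreover have "(\<lambda>t. R t \<bullet> z b) \<longlonglongrightarrow> Gf xbar \<bullet> z b" by (intro tendsto_intros Rlim)
    ultimately have "(\<lambda>t. (\<gamma> t b - R t \<bullet> z b) + R t \<bullet> z b) \<longlonglongrightarrow> 0 + Gf xbar \<bullet> z b"
      by (rule tendsto_add)
    then show ?thesis by simp
  qed
  define gs where "gs b = Gf xbar \<bullet> z b" for b
  have pos: "\<forall>a\<in>C. gs a \<ge> 0"
  proof
    fix a assume aC: "a \<in> C"
    then have "a \<in> S" using CS by auto
    show "gs a \<ge> 0" unfolding gs_def
      by (rule tendsto_lowerbound[OF gamlim[OF \<open>a \<in> S\<close>]])
         (use gammaC[OF aC] in \<open>auto intro: always_eventually\<close>)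
  qed
  have "(\<lambda>t. \<Sum>a\<in>S. \<gamma> t a *\<^sub>R G a (ys t)) \<longlonglongrightarrow> (\<Sum>a\<in>S. gs a *\<^sub>R G a xbar)"
    unfolding gs_def by (intro tendsto_sum tendsto_scaleR gamlim Glim)
  moreover have "(\<lambda>t. \<Sum>a\<in>S. \<gamma> t a *\<^sub>R G a (ys t)) \<longlonglongrightarrow> Gf xbar"
    using Rlim tendsto_cong[OF Rsum] by blast
  ultimately have "Gf xbar = (\<Sum>a\<in>S. gs a *\<^sub>R G a xbar)" using LIMSEQ_unique by blast
  then show ?thesis using pos by blast
qed


lemma C2_grad:
  fixes \<phi> :: "real ^ 'n \<Rightarrow> real"
  assumes "C2 \<phi>"
  shows "(\<phi> has_derivative (\<lambda>h. grad \<phi> x \<bullet> h)) (at x)" "isCont (grad \<phi>) x"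
proof -
  obtain G G' where G: "\<And>x. GDERIV \<phi> x :> G x" and G': "\<And>x. (G has_derivative G' x) (at x)"
    using assms unfolding C2_def by blast
  have gG: "grad \<phi> y = G y" for y
  proof -
    have "GDERIV \<phi> y :> grad \<phi> y" unfolding grad_def using G by (rule someI)
    then have "(\<lambda>h. h \<bullet> grad \<phi> y) = (\<lambda>h. h \<bullet> G y)"
      using G[of y] unfolding gderiv_def by (rule has_derivative_unique)
    then have "grad \<phi> y \<bullet> (grad \<phi> y - G y) = G y \<bullet> (grad \<phi> y - G y)"
      by (metis inner_commute)
    then have "(grad \<phi> y - G y) \<bullet> (grad \<phi> y - G y) = 0" by (simp add: inner_diff_left)
    then show ?thesis by simp
  qed
  show "(\<phi> has_derivative (\<lambda>h. grad \<phi> x \<bullet> h)) (at x)"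
    using G[of x] unfolding gderiv_def gG by (simp add: inner_commute)
  show "isCont (grad \<phi>) x"
    unfolding gG[abs_def] using G'[of x] by (rule has_derivative_continuous)
qed

theorem mainTheorem3:
  fixes f :: "real ^ 'n \<Rightarrow> real"
    and h :: "'i \<Rightarrow> real ^ 'n \<Rightarrow> real" and I :: "'i set"
    and g :: "'j \<Rightarrow> real ^ 'n \<Rightarrow> real" and J :: "'j set"
    and F1 F2 :: "nat \<Rightarrow> real ^ 'n \<Rightarrow> real" and k :: nat
    and xbar :: "real ^ 'n"
  assumes "finite I" and "finite J"
    and "C2 f" and "\<forall>i\<in>I. C2 (h i)" and "\<forall>j\<in>J. C2 (g j)"
    and "\<forall>m\<in>{1..k}. C2 (F1 m) \<and> C2 (F2 m)"
    and "local_minimizer f (mpoc_feasible h I g J F1 F2 k) xbar"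
    and "LICQ h I g J F1 F2 k xbar"
  shows "T_stationary f h I g J F1 F2 k xbar"
proof -
  note finI = assms(1) and finJ = assms(2)
  define J0' where "J0' = J0 g J xbar"
  define A01 where "A01 = a01 F1 F2 k xbar"
  define A10 where "A10 = a10 F1 F2 k xbar"
  define A00 where "A00 = a00 F1 F2 k xbar"
  have finJ0: "finite J0'" unfolding J0'_def J0_def using finJ by simp
  have finA: "finite A01" "finite A10" "finite A00"
    unfolding A01_def A10_def A00_def a01_def a10_def a00_def by auto
  have disj1: "A10 \<inter> A00 = {}" "A01 \<inter> A00 = {}"
    unfolding A01_def A10_def A00_def a01_def a10_def a00_def by auto
  have xM: "xbar \<in> mpoc_feasible h I g J F1 F2 k" using assms(7) unfolding local_minimizer_def by blast
  then have hx: "\<forall>i\<in>I. h i xbar = 0" and gx: "\<forall>j\<in>J. g j xbar \<ge> 0"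
    and Fx: "\<forall>m\<in>{1..k}. F1 m xbar * F2 m xbar = 0 \<and> F2 m xbar \<ge> 0"
    unfolding mpoc_feasible_def by auto
  define u :: "'i + 'j + nat + nat \<Rightarrow> real ^ 'n \<Rightarrow> real"
    where "u = case_sum h (case_sum g (case_sum F1 F2))"
  define S where "S = I <+> (J0' <+> (A01 <+> (A10 \<union> A00)))"
  define C :: "('i + 'j + nat + nat) set" where "C = Inr ` Inl ` J0'"
  have finS: "finite S" unfolding S_def using finI finJ0 finA by simp
  have CS: "C \<subseteq> S" unfolding C_def S_def by auto
  have C2u: "C2 (u a)" if "a \<in> S" for a
    using that assms(4,5,6) unfolding S_def u_def J0'_def J0_def A01_def A10_def A00_def
      a01_def a10_def a00_def by auto
  have sumS: "(\<Sum>a\<in>S. \<phi> a) = (\<Sum>i\<in>I. \<phi> (Inl i)) + (\<Sum>j\<in>J0'. \<phi> (Inr (Inl j)))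
      + (\<Sum>m\<in>A01. \<phi> (Inr (Inr (Inl m)))) + (\<Sum>m\<in>A10 \<union> A00. \<phi> (Inr (Inr (Inr m))))"
    for \<phi> :: "'i + 'j + nat + nat \<Rightarrow> real ^ 'n"
    unfolding S_def using finI finJ0 finA by (simp add: sum.Plus o_def add.assoc)
  have act: "u a xbar = 0" if "a \<in> S" for a
    using that hx unfolding S_def u_def J0'_def J0_def A01_def A10_def A00_def
      a01_def a10_def a00_def by auto
  have cover: "m \<in> A01 \<or> m \<in> A10 \<or> m \<in> A00" if "m \<in> {1..k}" for m
    using Fx that unfolding A01_def A10_def A00_def a01_def a10_def a00_def
    by (auto simp: less_le)
  obtain \<epsilon> where epos: "\<epsilon> > 0"
    and emin: "\<And>y. y \<in> mpoc_feasible h I g J F1 F2 k \<Longrightarrow> dist y xbar < \<epsilon> \<Longrightarrow> f xbar \<le> f y"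
    using assms(7) unfolding local_minimizer_def by blast
  have ev1: "eventually (\<lambda>y. \<forall>j\<in>J - J0'. g j y > 0) (nhds xbar)"
  proof (rule eventually_ball_finite)
    show "finite (J - J0')" using finJ by simp
    show "\<forall>j\<in>J - J0'. eventually (\<lambda>y. g j y > 0) (nhds xbar)"
    proof
    fix j assume j: "j \<in> J - J0'"
    then have "g j xbar > 0" using gx unfolding J0'_def J0_def by force
    moreover have "isCont (g j) xbar" using C2_grad(1)[of "g j"] assms(5) j
      by (meson DiffD1 has_derivative_continuous)
    ultimately show "eventually (\<lambda>y. g j y > 0) (nhds xbar)"
      by (metis isCont_def order_tendstoD(1) tendsto_at_iff_tendsto_nhds)
    qed
  qed
  have ev2: "eventually (\<lambda>y. \<forall>m\<in>A01. F2 m y > 0) (nhds xbar)"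
  proof (rule eventually_ball_finite)
    show "finite A01" using finA by simp
    show "\<forall>m\<in>A01. eventually (\<lambda>y. F2 m y > 0) (nhds xbar)"
    proof
    fix m assume m: "m \<in> A01"
    then have "F2 m xbar > 0" "m \<in> {1..k}" unfolding A01_def a01_def by auto
    moreover have "isCont (F2 m) xbar" using C2_grad(1)[of "F2 m"] assms(6) \<open>m \<in> {1..k}\<close>
      by (meson has_derivative_continuous)
    ultimately show "eventually (\<lambda>y. F2 m y > 0) (nhds xbar)"
      by (metis isCont_def order_tendstoD(1) tendsto_at_iff_tendsto_nhds)
    qed
  qed
  obtain d where dpos: "d > 0" and dball: "\<And>y. dist y xbar < d \<Longrightarrow>
      (\<forall>j\<in>J - J0'. g j y > 0) \<and> (\<forall>m\<in>A01. F2 m y > 0)"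
    using eventually_conj[OF ev1 ev2] unfolding eventually_nhds_metric by (metis dist_commute)
  define \<delta> where "\<delta> = min d \<epsilon>"
  have dlpos: "\<delta> > 0" unfolding \<delta>_def using dpos epos by simp
  have lmin: "f xbar \<le> f y" if y: "dist y xbar < \<delta>" "\<forall>a\<in>S-C. u a y = 0" "\<forall>a\<in>C. u a y \<ge> 0" for y
  proof (rule emin)
    show "dist y xbar < \<epsilon>" using y unfolding \<delta>_def by simp
    have pos: "\<forall>j\<in>J - J0'. g j y > 0" "\<forall>m\<in>A01. F2 m y > 0" using dball y(1) unfolding \<delta>_def by auto
    have hy: "\<forall>i\<in>I. h i y = 0"
    proof
      fix i assume "i \<in> I" then have "Inl i \<in> S - C" unfolding S_def C_def by auto
      then show "h i y = 0" using y(2) unfolding u_def by force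
    qed
    have gy0: "\<forall>j\<in>J0'. g j y \<ge> 0"
    proof
      fix j assume "j \<in> J0'" then have "Inr (Inl j) \<in> C" unfolding C_def by auto
      then show "g j y \<ge> 0" using y(3) unfolding u_def by force
    qed
    have F1y: "\<forall>m\<in>A01. F1 m y = 0"
    proof
      fix m assume "m \<in> A01" then have "Inr (Inr (Inl m)) \<in> S - C" unfolding S_def C_def by auto
      then show "F1 m y = 0" using y(2) unfolding u_def by force
    qed
    have F2y: "\<forall>m\<in>A10 \<union> A00. F2 m y = 0"
    proof
      fix m assume "m \<in> A10 \<union> A00" then have "Inr (Inr (Inr m)) \<in> S - C" unfolding S_def C_def by auto
      then show "F2 m y = 0" using y(2) unfolding u_def by force
    qed
    show "y \<in> mpoc_feasible h I g J F1 F2 k"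
      unfolding mpoc_feasible_def
    proof (intro CollectI conjI ballI)
      show "h i y = 0" if "i \<in> I" for i using hy that by blast
      show "g j y \<ge> 0" if "j \<in> J" for j using gy0 pos(1) that by (cases "j \<in> J0'") (auto simp: less_imp_le)
      fix m assume m: "m \<in> {1..k}"
      show "F1 m y * F2 m y = 0" "F2 m y \<ge> 0"
        using cover[OF m] F1y F2y pos(2) by (auto simp: less_imp_le)
    qed
  qed
  have uI: "u (Inl i) = h i" "u (Inr (Inl j)) = g j" "u (Inr (Inr (Inl m))) = F1 m"
    "u (Inr (Inr (Inr m))) = F2 m" for i j m unfolding u_def by simp_all
  have L: "\<forall>(a::'i \<Rightarrow> real) (b::'j \<Rightarrow> real) (c::nat \<Rightarrow> real) (d::nat \<Rightarrow> real).
      (\<Sum>i\<in>I. a i *\<^sub>R grad (h i) xbar) + (\<Sum>j\<in>J0'. b j *\<^sub>R grad (g j) xbar)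
      + (\<Sum>m\<in>A01 \<union> A00. c m *\<^sub>R grad (F1 m) xbar)
      + (\<Sum>m\<in>A10 \<union> A00. d m *\<^sub>R grad (F2 m) xbar) = 0
      \<longrightarrow> (\<forall>i\<in>I. a i = 0) \<and> (\<forall>j\<in>J0'. b j = 0)
          \<and> (\<forall>m\<in>A01 \<union> A00. c m = 0)
          \<and> (\<forall>m\<in>A10 \<union> A00. d m = 0)"
    using assms(8) unfolding LICQ_def J0'_def A01_def A10_def A00_def .
  have indep: "\<forall>\<alpha>. (\<Sum>a\<in>S. \<alpha> a *\<^sub>R grad (u a) xbar) = 0 \<longrightarrow> (\<forall>a\<in>S. \<alpha> a = 0)"
  proof (intro allI impI)
    fix \<alpha> :: "'i + 'j + nat + nat \<Rightarrow> real"
    assume z: "(\<Sum>a\<in>S. \<alpha> a *\<^sub>R grad (u a) xbar) = 0"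
    define c where "c m = (if m \<in> A01 then \<alpha> (Inr (Inr (Inl m))) else 0)" for m
    have cs: "(\<Sum>m\<in>A01 \<union> A00. c m *\<^sub>R grad (F1 m) xbar) = (\<Sum>m\<in>A01. \<alpha> (Inr (Inr (Inl m))) *\<^sub>R grad (F1 m) xbar)"
    proof -
      have "(\<Sum>m\<in>A01 \<union> A00. c m *\<^sub>R grad (F1 m) xbar) = (\<Sum>m\<in>A01. c m *\<^sub>R grad (F1 m) xbar)"
        by (rule sum.mono_neutral_right) (use finA disj1 in \<open>auto simp: c_def\<close>)
      also have "\<dots> = (\<Sum>m\<in>A01. \<alpha> (Inr (Inr (Inl m))) *\<^sub>R grad (F1 m) xbar)"
        by (rule sum.cong) (auto simp: c_def)
      finally show ?thesis .
    qed
    have "(\<Sum>i\<in>I. \<alpha> (Inl i) *\<^sub>R grad (h i) xbar) + (\<Sum>j\<in>J0'. \<alpha> (Inr (Inl j)) *\<^sub>R grad (g j) xbar)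
      + (\<Sum>m\<in>A01 \<union> A00. c m *\<^sub>R grad (F1 m) xbar)
      + (\<Sum>m\<in>A10 \<union> A00. \<alpha> (Inr (Inr (Inr m))) *\<^sub>R grad (F2 m) xbar) = 0"
      using z unfolding sumS cs uI .
    then have r: "(\<forall>i\<in>I. \<alpha> (Inl i) = 0) \<and> (\<forall>j\<in>J0'. \<alpha> (Inr (Inl j)) = 0)
          \<and> (\<forall>m\<in>A01 \<union> A00. c m = 0) \<and> (\<forall>m\<in>A10 \<union> A00. \<alpha> (Inr (Inr (Inr m))) = 0)"
      by (rule L[rule_format])
    show "\<forall>a\<in>S. \<alpha> a = 0"
    proof
      fix a assume "a \<in> S"
      then show "\<alpha> a = 0" using r unfolding S_def c_def by (auto; metis UnI1)
    qed
  qed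
  obtain \<gamma> where gam: "grad f xbar = (\<Sum>a\<in>S. \<gamma> a *\<^sub>R grad (u a) xbar)" and gpos: "\<forall>a\<in>C. \<gamma> a \<ge> 0"
    using KKT[OF finS CS C2_grad(1)[OF assms(3)] C2_grad(2)[OF assms(3)]
        C2_grad(1)[OF C2u] C2_grad(2)[OF C2u] act dlpos lmin indep] by blast
  have split10: "(\<Sum>m\<in>A10 \<union> A00. \<gamma> (Inr (Inr (Inr m))) *\<^sub>R grad (F2 m) xbar)
      = (\<Sum>m\<in>A10. \<gamma> (Inr (Inr (Inr m))) *\<^sub>R grad (F2 m) xbar) + (\<Sum>m\<in>A00. \<gamma> (Inr (Inr (Inr m))) *\<^sub>R grad (F2 m) xbar)"
    using finA disj1 by (simp add: sum.union_disjoint)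
  show ?thesis
    unfolding T_stationary_def J0'_def[symmetric] A01_def[symmetric] A10_def[symmetric] A00_def[symmetric]
  proof (intro conjI xM exI)
    show "grad f xbar = (\<Sum>i\<in>I. \<gamma> (Inl i) *\<^sub>R grad (h i) xbar) + (\<Sum>j\<in>J0'. \<gamma> (Inr (Inl j)) *\<^sub>R grad (g j) xbar)
        + (\<Sum>m\<in>A01. \<gamma> (Inr (Inr (Inl m))) *\<^sub>R grad (F1 m) xbar)
        + (\<Sum>m\<in>A10. \<gamma> (Inr (Inr (Inr m))) *\<^sub>R grad (F2 m) xbar)
        + (\<Sum>m\<in>A00. 0 *\<^sub>R grad (F1 m) xbar + \<gamma> (Inr (Inr (Inr m))) *\<^sub>R grad (F2 m) xbar)"
      using gam unfolding sumS uI split10 by (simp add: add.assoc)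
    show "\<forall>j\<in>J0'. \<gamma> (Inr (Inl j)) \<ge> 0" using gpos unfolding C_def by auto
    show "\<forall>m\<in>A00. (0::real) = 0 \<or> \<gamma> (Inr (Inr (Inr m))) \<le> 0" by simp
  qed
qed

end
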